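(* Let $\Theta$ be a variety and $H\in\Theta$. If $H$ is LG-saturated, then $H$ is MT-saturated.
   Context: Setting: variety $\Theta$, infinite variable set $X^0$, $\Gamma^0$ its finite subsets, $W(X)$ free $\Theta$-algebras, points $\mu:W(X)\to H$. $\Phi(X)$ ($X\in\Gamma^0$) is the $X$-sort of the multi-sorted algebra of formulas over $\Theta$ (free multi-sorted Halmos algebra generated by equalities $w\equiv w'$, $w,w'\in W(X)$), with valuation $Val^X_H$ into subsets of $\mathrm{Hom}(W(X),H)$; $LKer(\mu)=\{u\in\Phi(X):\mu\in Val^X_H(u)\}$, and $Th^X(H)=\{u:Val^X_H(u)=\mathrm{Hom}(W(X),H)\}$. $H$ is LG-saturated if for every $X\in\Gamma^0$ every Boolean ultrafilter of $\Phi(X)$ containing $Th^X(H)$ equals $LKer(\mu)$ for some $\mu:W(X)\to H$. $\Phi(X^0)$ is the one-sorted algebra of first-order formulas (modulo logical equivalence) over variables $X^0$ built from equalities in $W(X^0)$. For $X=\{x_1,\dots,x_n\}$, a formula of $\Phi(X^0)$ is $X$-special if its free variables lie in $X$ and its bound variables lie in $X^0\setminus X$. An $X$-type (MT-type) of $H$ is a set of $X$-special formulas consistent with the elementary theory of $H$. For $\mu$ with $a_i=\mu(x_i)$, $Tp^H(\mu)$ is the set of $X$-special $u(x_1,\dots,x_n;y_1,\dots,y_m)$ with $u(a_1,\dots,a_n;y_1,\dots,y_m)$ true in $H$. $H$ is MT-saturated if for every $X\in\Gamma^0$ and every $X$-type $T$ of $H$ there is a point $\mu:W(X)\to H$ with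 $T\subset Tp^H(\mu)$. *)

theory Defs
  imports Main
begin

text \<open>Operation symbols have type 'f with arity function ar. Variables are natural
  numbers: the infinite variable set X0 is UNIV :: nat set.\<close>

datatype 'f trm = Var nat | App 'f "'f trm list"

fun wf_trm :: "('f \<Rightarrow> nat) \<Rightarrow> 'f trm \<Rightarrow> bool" where
  "wf_trm ar (Var n) = True"
| "wf_trm ar (App f ts) = (length ts = ar f \<and> (\<forall>t\<in>set ts. wf_trm ar t))"

fun tvars :: "'f trm \<Rightarrow> nat set" where
  "tvars (Var n) = {n}"
| "tvars (App f ts) = (\<Union>t\<in>set ts. tvars t)"

fun eval :: "('f \<Rightarrow> 'a list \<Rightarrow> 'a) \<Rightarrow> (nat \<Rightarrow> 'a) \<Rightarrow> 'f trm \<Rightarrow> 'a" where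
  "eval I s (Var n) = s n"
| "eval I s (App f ts) = I f (map (eval I s) ts)"

definition is_alg :: "('f \<Rightarrow> nat) \<Rightarrow> 'a set \<Rightarrow> ('f \<Rightarrow> 'a list \<Rightarrow> 'a) \<Rightarrow> bool" where
  "is_alg ar A I \<longleftrightarrow> A \<noteq> {} \<and>
     (\<forall>f xs. length xs = ar f \<longrightarrow> set xs \<subseteq> A \<longrightarrow> I f xs \<in> A)"

text \<open>A variety Theta is given by a set E of identities (pairs of well-formed terms).\<close>
definition variety :: "('f \<Rightarrow> nat) \<Rightarrow> ('f trm \<times> 'f trm) set \<Rightarrow> bool" where
  "variety ar E \<longleftrightarrow> (\<forall>(l, r)\<in>E. wf_trm ar l \<and> wf_trm ar r)"

definition in_variety ::
  "('f \<Rightarrow> nat) \<Rightarrow> ('f trm \<times> 'f trm) set \<Rightarrow> 'a set \<Rightarrow> ('f \<Rightarrow> 'a list \<Rightarrow> 'a) \<Rightarrow> bool" where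
  "in_variety ar E A I \<longleftrightarrow> is_alg ar A I \<and>
     (\<forall>(l, r)\<in>E. \<forall>s. range s \<subseteq> A \<longrightarrow> eval I s l = eval I s r)"

datatype 'f fm = Eq "'f trm" "'f trm" | Neg "'f fm" | Conj "'f fm" "'f fm" | Ex nat "'f fm"

fun wf_fm :: "('f \<Rightarrow> nat) \<Rightarrow> 'f fm \<Rightarrow> bool" where
  "wf_fm ar (Eq t1 t2) = (wf_trm ar t1 \<and> wf_trm ar t2)"
| "wf_fm ar (Neg u) = wf_fm ar u"
| "wf_fm ar (Conj u v) = (wf_fm ar u \<and> wf_fm ar v)"
| "wf_fm ar (Ex x u) = wf_fm ar u"

fun fv :: "'f fm \<Rightarrow> nat set" where
  "fv (Eq t1 t2) = tvars t1 \<union> tvars t2"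
| "fv (Neg u) = fv u"
| "fv (Conj u v) = fv u \<union> fv v"
| "fv (Ex x u) = fv u - {x}"

fun bv :: "'f fm \<Rightarrow> nat set" where
  "bv (Eq t1 t2) = {}"
| "bv (Neg u) = bv u"
| "bv (Conj u v) = bv u \<union> bv v"
| "bv (Ex x u) = insert x (bv u)"

fun sat :: "'a set \<Rightarrow> ('f \<Rightarrow> 'a list \<Rightarrow> 'a) \<Rightarrow> (nat \<Rightarrow> 'a) \<Rightarrow> 'f fm \<Rightarrow> bool" where
  "sat A I s (Eq t1 t2) = (eval I s t1 = eval I s t2)"
| "sat A I s (Neg u) = (\<not> sat A I s u)"
| "sat A I s (Conj u v) = (sat A I s u \<and> sat A I s v)"
| "sat A I s (Ex x u) = (\<exists>a\<in>A. sat A I (s(x := a)) u)"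

text \<open>Elements of Phi(X), X finite: (well-formed) formulas whose free variables lie in X,
  considered up to equivalence in Theta.  Points mu : W(X) \<rightarrow> H are represented
  by their values on the free generators X, i.e. by assignments s with s ` X \<subseteq> A.\<close>

definition PhiX :: "('f \<Rightarrow> nat) \<Rightarrow> nat set \<Rightarrow> 'f fm set" where
  "PhiX ar X = {u. wf_fm ar u \<and> fv u \<subseteq> X}"

definition is_point :: "'a set \<Rightarrow> nat set \<Rightarrow> (nat \<Rightarrow> 'a) \<Rightarrow> bool" where
  "is_point A X s \<longleftrightarrow> s ` X \<subseteq> A"

text \<open>Boolean order of Phi(X): u \<le> v iff u \<longrightarrow> v holds under every point of
  every algebra of Theta (algebras with carrier in the ambient type 'a).\<close>
definition phi_le ::
  "('f \<Rightarrow> nat) \<Rightarrow> ('f trm \<times> 'f trm) set \<Rightarrow> 'a itself \<Rightarrow> nat set \<Rightarrow> 'f fm \<Rightarrow> 'f fm \<Rightarrow> bool" where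
  "phi_le ar E (_::'a itself) X u v \<longleftrightarrow>
     (\<forall>(B::'a set) J s. in_variety ar E B J \<longrightarrow> is_point B X s \<longrightarrow> sat B J s u \<longrightarrow> sat B J s v)"

definition ultrafilter_Phi ::
  "('f \<Rightarrow> nat) \<Rightarrow> ('f trm \<times> 'f trm) set \<Rightarrow> 'a itself \<Rightarrow> nat set \<Rightarrow> 'f fm set \<Rightarrow> bool" where
  "ultrafilter_Phi ar E T X U \<longleftrightarrow>
     U \<subseteq> PhiX ar X \<and>
     U \<noteq> PhiX ar X \<and>
     (\<forall>u\<in>U. \<forall>v\<in>PhiX ar X. phi_le ar E T X u v \<longrightarrow> v \<in> U) \<and>
     (\<forall>u\<in>U. \<forall>v\<in>U. Conj u v \<in> U) \<and>
     (\<forall>u\<in>PhiX ar X. u \<in> U \<or> Neg u \<in> U)"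

definition LKer ::
  "('f \<Rightarrow> nat) \<Rightarrow> 'a set \<Rightarrow> ('f \<Rightarrow> 'a list \<Rightarrow> 'a) \<Rightarrow> nat set \<Rightarrow> (nat \<Rightarrow> 'a) \<Rightarrow> 'f fm set" where
  "LKer ar A I X s = {u \<in> PhiX ar X. sat A I s u}"

definition ThX ::
  "('f \<Rightarrow> nat) \<Rightarrow> 'a set \<Rightarrow> ('f \<Rightarrow> 'a list \<Rightarrow> 'a) \<Rightarrow> nat set \<Rightarrow> 'f fm set" where
  "ThX ar A I X = {u \<in> PhiX ar X. \<forall>s. is_point A X s \<longrightarrow> sat A I s u}"

definition LG_saturated ::
  "('f \<Rightarrow> nat) \<Rightarrow> ('f trm \<times> 'f trm) set \<Rightarrow> 'a set \<Rightarrow> ('f \<Rightarrow> 'a list \<Rightarrow> 'a) \<Rightarrow> bool" where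
  "LG_saturated ar E A I \<longleftrightarrow>
     (\<forall>X. finite X \<longrightarrow>
        (\<forall>U. ultrafilter_Phi ar E TYPE('a) X U \<and> ThX ar A I X \<subseteq> U \<longrightarrow>
           (\<exists>s. is_point A X s \<and> U = LKer ar A I X s)))"

definition X_special :: "('f \<Rightarrow> nat) \<Rightarrow> nat set \<Rightarrow> 'f fm \<Rightarrow> bool" where
  "X_special ar X u \<longleftrightarrow> wf_fm ar u \<and> fv u \<subseteq> X \<and> bv u \<inter> X = {}"

text \<open>A set T of X-special formulas is consistent with the elementary theory of H
  iff it is finitely satisfiable in H (compactness).\<close>
definition MT_type ::
  "('f \<Rightarrow> nat) \<Rightarrow> 'a set \<Rightarrow> ('f \<Rightarrow> 'a list \<Rightarrow> 'a) \<Rightarrow> nat set \<Rightarrow> 'f fm set \<Rightarrow> bool" where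
  "MT_type ar A I X T \<longleftrightarrow>
     (\<forall>u\<in>T. X_special ar X u) \<and>
     (\<forall>T0. T0 \<subseteq> T \<longrightarrow> finite T0 \<longrightarrow> (\<exists>s. is_point A X s \<and> (\<forall>u\<in>T0. sat A I s u)))"

definition Tp ::
  "('f \<Rightarrow> nat) \<Rightarrow> 'a set \<Rightarrow> ('f \<Rightarrow> 'a list \<Rightarrow> 'a) \<Rightarrow> nat set \<Rightarrow> (nat \<Rightarrow> 'a) \<Rightarrow> 'f fm set" where
  "Tp ar A I X s = {u. X_special ar X u \<and> sat A I s u}"

definition MT_saturated ::
  "('f \<Rightarrow> nat) \<Rightarrow> 'a set \<Rightarrow> ('f \<Rightarrow> 'a list \<Rightarrow> 'a) \<Rightarrow> bool" where
  "MT_saturated ar A I \<longleftrightarrow>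
     (\<forall>X. finite X \<longrightarrow>
        (\<forall>T. MT_type ar A I X T \<longrightarrow> (\<exists>s. is_point A X s \<and> T \<subseteq> Tp ar A I X s)))"

end

theory Submission
  imports Defs
begin

definition FS :: "('f \<Rightarrow> nat) \<Rightarrow> 'a set \<Rightarrow> ('f \<Rightarrow> 'a list \<Rightarrow> 'a) \<Rightarrow> nat set \<Rightarrow> 'f fm set \<Rightarrow> bool" where
  "FS ar A I X S \<longleftrightarrow> S \<subseteq> PhiX ar X \<and>
     (\<forall>S0. S0 \<subseteq> S \<longrightarrow> finite S0 \<longrightarrow> (\<exists>s. is_point A X s \<and> (\<forall>u\<in>S0. sat A I s u)))"

lemma FS_insert:
  assumes "FS ar A I X M" "v \<in> PhiX ar X" "finite F" "F \<subseteq> M"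
    and "\<And>s. is_point A X s \<Longrightarrow> (\<forall>u\<in>F. sat A I s u) \<Longrightarrow> sat A I s v"
  shows "FS ar A I X (insert v M)"
  unfolding FS_def
proof (intro conjI allI impI)
  show "insert v M \<subseteq> PhiX ar X" using assms(1,2) by (auto simp: FS_def)
  fix S0 assume S0: "S0 \<subseteq> insert v M" "finite S0"
  have "S0 - {v} \<union> F \<subseteq> M" "finite (S0 - {v} \<union> F)" using S0 assms(3,4) by auto
  then obtain s where s: "is_point A X s" "\<forall>u\<in>S0 - {v} \<union> F. sat A I s u"
    using assms(1) unfolding FS_def by blast
  then have "sat A I s v" using assms(5) by blast
  then show "\<exists>s. is_point A X s \<and> (\<forall>u\<in>S0. sat A I s u)" using s by blast
qed

theorem theorem3p3:
  fixes ar :: "'f \<Rightarrow> nat" and E :: "('f trm \<times> 'f trm) set"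
    and A :: "'a set" and I :: "'f \<Rightarrow> 'a list \<Rightarrow> 'a"
  assumes "variety ar E"
    and "in_variety ar E A I"
    and "LG_saturated ar E A I"
  shows "MT_saturated ar A I"
  unfolding MT_saturated_def
proof (intro allI impI)
  fix X :: "nat set" and T
  assume fX: "finite X" and MT: "MT_type ar A I X T"
  have Ane: "A \<noteq> {}" using assms(2) by (simp add: in_variety_def is_alg_def)
  define B where "B = T \<union> ThX ar A I X"
  have TP: "T \<subseteq> PhiX ar X" using MT by (auto simp: MT_type_def X_special_def PhiX_def)
  have FSB: "FS ar A I X B"
    unfolding FS_def
  proof (intro conjI allI impI)
    show "B \<subseteq> PhiX ar X" using TP by (auto simp: B_def ThX_def)
    fix S0 assume S0: "S0 \<subseteq> B" "finite S0"
    then obtain s where s: "is_point A X s" "\<forall>u\<in>S0 \<inter> T. sat A I s u"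
      using MT unfolding MT_type_def by (meson inf_le2 finite_Int)
    then show "\<exists>s. is_point A X s \<and> (\<forall>u\<in>S0. sat A I s u)"
      using S0 by (auto simp: B_def ThX_def)
  qed
  define \<A> where "\<A> = {S. B \<subseteq> S \<and> FS ar A I X S}"
  have "\<exists>M\<in>\<A>. \<forall>Y\<in>\<A>. M \<subseteq> Y \<longrightarrow> Y = M"
  proof (rule subset_Zorn_nonempty)
    show "\<A> \<noteq> {}" using FSB by (auto simp: \<A>_def)
    fix \<C> assume C: "\<C> \<noteq> {}" "subset.chain \<A> \<C>"
    have CA: "\<C> \<subseteq> \<A>" using C(2) by (simp add: subset_chain_def)
    show "\<Union>\<C> \<in> \<A>"
      unfolding \<A>_def
    proof (intro CollectI conjI)
      show "B \<subseteq> \<Union>\<C>" using C CA by (auto simp: \<A>_def)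
      show "FS ar A I X (\<Union>\<C>)"
        unfolding FS_def
      proof (intro conjI allI impI)
        show "\<Union>\<C> \<subseteq> PhiX ar X" using CA by (auto simp: \<A>_def FS_def)
        fix S0 assume S0: "S0 \<subseteq> \<Union>\<C>" "finite S0"
        obtain Y where Y: "Y \<in> \<C>" "S0 \<subseteq> Y"
          using finite_subset_Union_chain[OF S0(2) S0(1) C(1) C(2)] by blast
        then show "\<exists>s. is_point A X s \<and> (\<forall>u\<in>S0. sat A I s u)"
          using CA S0 by (auto simp: \<A>_def FS_def)
      qed
    qed
  qed
  then obtain M where MA: "M \<in> \<A>" and Mmax: "\<And>Y. Y \<in> \<A> \<Longrightarrow> M \<subseteq> Y \<Longrightarrow> Y = M" by blast
  have BM: "B \<subseteq> M" and FSM: "FS ar A I X M" using MA by (auto simp: \<A>_def)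
  have MP: "M \<subseteq> PhiX ar X" using FSM by (simp add: FS_def)
  have ext: "v \<in> M" if "FS ar A I X (insert v M)" for v
    using Mmax[of "insert v M"] that BM by (auto simp: \<A>_def)
  have UF: "ultrafilter_Phi ar E TYPE('a) X M"
    unfolding ultrafilter_Phi_def
  proof (intro conjI ballI impI)
    show "M \<subseteq> PhiX ar X" by (rule MP)
    let ?f = "Neg (Ex 0 (Eq (Var 0) (Var 0))) :: 'f fm"
    have fP: "?f \<in> PhiX ar X" by (simp add: PhiX_def)
    have "?f \<notin> M"
    proof
      assume "?f \<in> M"
      then obtain s where "is_point A X s" "sat A I s ?f"
        using FSM unfolding FS_def by (metis empty_subsetI finite.emptyI finite_insert insert_subset singletonI)
      then show False using Ane by auto
    qed
    then show "M \<noteq> PhiX ar X" using fP by blast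
  next
    fix u v assume u: "u \<in> M" and v: "v \<in> PhiX ar X" and le: "phi_le ar E TYPE('a) X u v"
    show "v \<in> M"
      by (rule ext, rule FS_insert[OF FSM v, of "{u}"]) (use u le assms(2) in \<open>auto simp: phi_le_def\<close>)
  next
    fix u v assume u: "u \<in> M" and v: "v \<in> M"
    have "Conj u v \<in> PhiX ar X" using u v MP by (auto simp: PhiX_def)
    then show "Conj u v \<in> M"
      by (intro ext FS_insert[OF FSM _ _, of _ "{u,v}"]) (use u v in auto)
  next
    fix u assume uP: "u \<in> PhiX ar X"
    have nP: "Neg u \<in> PhiX ar X" using uP by (simp add: PhiX_def)
    show "u \<in> M \<or> Neg u \<in> M"
    proof (rule ccontr)
      assume "\<not> (u \<in> M \<or> Neg u \<in> M)"
      then have n1: "\<not> FS ar A I X (insert u M)" and n2: "\<not> FS ar A I X (insert (Neg u) M)"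
        using ext by blast+
      from n1 obtain S1 where S1: "S1 \<subseteq> insert u M" "finite S1"
        "\<forall>s. is_point A X s \<longrightarrow> \<not> (\<forall>w\<in>S1. sat A I s w)"
        using MP uP unfolding FS_def by blast
      from n2 obtain S2 where S2: "S2 \<subseteq> insert (Neg u) M" "finite S2"
        "\<forall>s. is_point A X s \<longrightarrow> \<not> (\<forall>w\<in>S2. sat A I s w)"
        using MP nP unfolding FS_def by blast
      have "S1 - {u} \<union> (S2 - {Neg u}) \<subseteq> M" "finite (S1 - {u} \<union> (S2 - {Neg u}))"
        using S1 S2 by auto
      then obtain s where s: "is_point A X s" "\<forall>w\<in>S1 - {u} \<union> (S2 - {Neg u}). sat A I s w"
        using FSM unfolding FS_def by blast
      show False
      proof (cases "sat A I s u")
        case True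
        then have "\<forall>w\<in>S1. sat A I s w" using s by auto
        then show False using S1(3) s(1) by blast
      next
        case False
        then have "\<forall>w\<in>S2. sat A I s w" using s by auto
        then show False using S2(3) s(1) by blast
      qed
    qed
  qed
  have "ThX ar A I X \<subseteq> M" using BM by (auto simp: B_def)
  then obtain s where s: "is_point A X s" "M = LKer ar A I X s"
    using assms(3) fX UF unfolding LG_saturated_def by blast
  have "T \<subseteq> Tp ar A I X s"
  proof
    fix u assume "u \<in> T"
    then have "u \<in> M" "X_special ar X u" using BM MT by (auto simp: B_def MT_type_def)
    then show "u \<in> Tp ar A I X s" using s(2) by (auto simp: LKer_def Tp_def)
  qed
  then show "\<exists>s. is_point A X s \<and> T \<subseteq> Tp ar A I X s" using s(1) by blast
qed

end
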